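(* Let $\nu\ge2$, $\rho>0$, $\lambda_1,\dots,\lambda_\nu>0$. Let $H(u)=P\big(\sum_{n=2}^\nu\lambda_nY_n<u\big)$ and, if $\nu\ge3$, $\tilde H(u)=P\big(\sum_{n=3}^\nu\lambda_nY_n<u\big)$ for $u>0$, where $Y_2,\dots,Y_\nu$ are independent $\chi^2_1$ variables; if $\nu=2$ set $\tilde H(u)=1$ for $u>0$. For $0<y_1<\rho/\lambda_1$ define $$\psi_{\rm cond}(y_2\mid y_1)=\frac{g_1(y_2)\,\tilde H(\rho-\lambda_1y_1-\lambda_2y_2)}{H(\rho-\lambda_1y_1)}\ \text{ if } 0<y_2<(\rho-\lambda_1y_1)/\lambda_2,\qquad 0\ \text{ otherwise},$$ where $g_1$ is the $\chi^2_1$ density. Then for any $0<y_{10}<y_{11}<\rho/\lambda_1$, the ratio $\psi_{\rm cond}(y_2\mid y_{11})/\psi_{\rm cond}(y_2\mid y_{10})$ is nonincreasing in $y_2$ over $0<y_2<(\rho-\lambda_1y_{10})/\lambda_2$.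
   Context: $\psi_{\rm cond}(\cdot\mid y_1)$ is the conditional density of $Y_2=\lambda_2^{-1}X_2^2$ given $Y_1=\lambda_1^{-1}X_1^2=y_1$ when $X\sim N_\nu(0,\mathrm{diag}(\lambda_1,\dots,\lambda_\nu))$ is truncated to the ball $\{x:x^Tx<\rho\}$. *)

theory Defs
  imports "HOL-Probability.Probability"
begin

definition chi2_1_density :: "real \<Rightarrow> real" where
  "chi2_1_density y = (if 0 < y then exp (- y / 2) / sqrt (2 * pi * y) else 0)"

definition chi2_1 :: "real measure" where
  "chi2_1 = density lborel (\<lambda>y. ennreal (chi2_1_density y))"

definition chi2_weighted_cdf :: "(nat \<Rightarrow> real) \<Rightarrow> nat \<Rightarrow> nat \<Rightarrow> real \<Rightarrow> real" where
  "chi2_weighted_cdf lam m nu u =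
     measure (PiM {m..nu} (\<lambda>_. chi2_1))
       {Y \<in> space (PiM {m..nu} (\<lambda>_. chi2_1)). (\<Sum>n=m..nu. lam n * Y n) < u}"

definition H_fun :: "(nat \<Rightarrow> real) \<Rightarrow> nat \<Rightarrow> real \<Rightarrow> real" where
  "H_fun lam nu u = chi2_weighted_cdf lam 2 nu u"

definition Htilde_fun :: "(nat \<Rightarrow> real) \<Rightarrow> nat \<Rightarrow> real \<Rightarrow> real" where
  "Htilde_fun lam nu u = (if 3 \<le> nu then chi2_weighted_cdf lam 3 nu u else 1)"

definition psi_cond :: "(nat \<Rightarrow> real) \<Rightarrow> nat \<Rightarrow> real \<Rightarrow> real \<Rightarrow> real \<Rightarrow> real" where
  "psi_cond lam nu rho y1 y2 =
     (if 0 < y2 \<and> y2 < (rho - lam 1 * y1) / lam 2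
      then chi2_1_density y2 * Htilde_fun lam nu (rho - lam 1 * y1 - lam 2 * y2)
           / H_fun lam nu (rho - lam 1 * y1)
      else 0)"

end

theory Submission
  imports Defs
begin


lemma dc_measure_bdd:
  fixes D :: "real set"
  assumes sub: "D \<subseteq> {0..}" and z: "0 \<in> D" and dc: "\<And>x y. x \<in> D \<Longrightarrow> 0 \<le> y \<Longrightarrow> y \<le> x \<Longrightarrow> y \<in> D"
    and b: "bdd_above D"
  shows "D \<in> sets lborel \<and> emeasure lborel D = ennreal (Sup D)"
proof -
  define a where "a = Sup D"
  let ?a = a
  have ub: "x \<le> ?a" if "x \<in> D" for x using cSup_upper[OF that b] a_def by simp
  have a0: "0 \<le> ?a" using ub[OF z] .
  have lt: "x \<in> D" if x0: "0 \<le> x" and xa: "x < ?a" for x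
  proof -
    obtain y where "y \<in> D" "x < y" using less_cSupE[of x D] xa z a_def by blast
    then show ?thesis using dc x0 by auto
  qed
  show ?thesis
  proof (cases "?a \<in> D")
    case True
    have De: "D = {0..?a}" using ub sub dc[OF True] by auto
    have "{0..a} \<in> sets lborel \<and> emeasure lborel {0..a} = ennreal a" using a0 by simp
    then show ?thesis unfolding a_def[symmetric] by (simp only: De[symmetric])
  next
    case False
    have De: "D = {0..<?a}"
    proof
      show "D \<subseteq> {0..<a}"
      proof
        fix x assume "x \<in> D"
        then have "x \<le> a" "x \<noteq> a" "0 \<le> x" using ub False sub by auto
        then show "x \<in> {0..<a}" by simp
      qed
      show "{0..<a} \<subseteq> D" using lt by auto
    qed
    have "{0..<a} \<in> sets lborel \<and> emeasure lborel {0..<a} = ennreal a" using a0 by simp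
    then show ?thesis unfolding a_def[symmetric] by (simp only: De[symmetric])
  qed
qed

lemma dc_measure_unbdd:
  fixes D :: "real set"
  assumes sub: "D \<subseteq> {0..}" and dc: "\<And>x y. x \<in> D \<Longrightarrow> 0 \<le> y \<Longrightarrow> y \<le> x \<Longrightarrow> y \<in> D"
    and b: "\<not> bdd_above D"
  shows "D = {0..}"
proof
  show "{0..} \<subseteq> D"
  proof
    fix y :: real assume "y \<in> {0..}"
    then have y: "0 \<le> y" by simp
    obtain x where "x \<in> D" "y < x" using b by (meson bdd_above.unfold linorder_not_le)
    then show "y \<in> D" using dc y by auto
  qed
qed (use sub in auto)

lemma dc_measure:
  fixes D :: "real set"
  assumes sub: "D \<subseteq> {0..}" and z: "0 \<in> D" and dc: "\<And>x y. x \<in> D \<Longrightarrow> 0 \<le> y \<Longrightarrow> y \<le> x \<Longrightarrow> y \<in> D"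
  shows "D \<in> sets lborel"
proof (cases "bdd_above D")
  case True then show ?thesis using dc_measure_bdd[of D] sub z dc by blast
next
  case False then have "D = {0..}" using dc_measure_unbdd[of D] sub dc by metis
  then show ?thesis by simp
qed

lemma emeasure_lborel_Ici0: "emeasure lborel {0::real..} = \<infinity>"
proof (rule ccontr)
  assume "emeasure lborel {0::real..} \<noteq> \<infinity>"
  then obtain r where r: "emeasure lborel {0::real..} = ennreal r" "0 \<le> r"
    by (cases "emeasure lborel {0::real..}" rule: ennreal_cases) auto
  have "emeasure lborel {0..r+1} \<le> emeasure lborel {0::real..}" by (rule emeasure_mono) auto
  then show False using r by simp
qed

lemma level_ineq:
  fixes f g h :: "real \<Rightarrow> real" and s t :: real
  assumes t: "0 < t" "t < 1"
    and fm: "\<And>x y. 0 \<le> x \<Longrightarrow> x \<le> y \<Longrightarrow> f y \<le> f x"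
    and gm: "\<And>x y. 0 \<le> x \<Longrightarrow> x \<le> y \<Longrightarrow> g y \<le> g x"
    and hm: "\<And>x y. 0 \<le> x \<Longrightarrow> x \<le> y \<Longrightarrow> h y \<le> h x"
    and pl: "\<And>x y. 0 \<le> x \<Longrightarrow> 0 \<le> y \<Longrightarrow> min (f x) (g y) \<le> h ((1-t)*x + t*y)"
    and f0: "s < f 0" and g0: "s < g 0"
  shows "ennreal (1-t) * emeasure lborel {z. 0 \<le> z \<and> s < f z} + ennreal t * emeasure lborel {z. 0 \<le> z \<and> s < g z}
      \<le> emeasure lborel {z. 0 \<le> z \<and> s < h z}"
proof -
  define Df where "Df = {z. 0 \<le> z \<and> s < f z}"
  define Dg where "Dg = {z. 0 \<le> z \<and> s < g z}"
  define Dh where "Dh = {z. 0 \<le> z \<and> s < h z}"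
  have subf: "Df \<subseteq> {0..}" and subg: "Dg \<subseteq> {0..}" and subh: "Dh \<subseteq> {0..}"
    unfolding Df_def Dg_def Dh_def by auto
  have zf: "0 \<in> Df" using f0 unfolding Df_def by auto
  have zg: "0 \<in> Dg" using g0 unfolding Dg_def by auto
  have dcf: "y \<in> Df" if "x \<in> Df" "0 \<le> y" "y \<le> x" for x y
    using that fm[of y x] unfolding Df_def by auto
  have dcg: "y \<in> Dg" if "x \<in> Dg" "0 \<le> y" "y \<le> x" for x y
    using that gm[of y x] unfolding Dg_def by auto
  have dch: "y \<in> Dh" if "x \<in> Dh" "0 \<le> y" "y \<le> x" for x y
    using that hm[of y x] unfolding Dh_def by auto
  have comb: "(1-t)*x + t*y \<in> Dh" if "x \<in> Df" "y \<in> Dg" for x y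
  proof -
    have "0 \<le> x" "0 \<le> y" "s < f x" "s < g y" using that unfolding Df_def Dg_def by auto
    then have "s < h ((1-t)*x + t*y)" using pl[of x y] by (simp add: min_less_iff_conj order.strict_trans2)
    moreover have "0 \<le> (1-t)*x + t*y" using \<open>0 \<le> x\<close> \<open>0 \<le> y\<close> t by simp
    ultimately show ?thesis unfolding Dh_def by simp
  qed
  have zh: "0 \<in> Dh" using comb[OF zf zg] by simp
  show ?thesis
  proof (cases "bdd_above Dh")
    case False
    then have "Dh = {0..}" using dc_measure_unbdd[of Dh] subh dch by metis
    then have "emeasure lborel Dh = \<infinity>"
      by (simp add: emeasure_lborel_Ici0)
    then show ?thesis unfolding Dh_def by simp
  next
    case True
    define c where "c = Sup Dh"
    have hc: "x \<le> c" if "x \<in> Dh" for x using cSup_upper[OF that True] c_def by simp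
    have bf: "bdd_above Df"
    proof -
      have "x \<le> c / (1-t)" if "x \<in> Df" for x
      proof -
        have "(1-t)*x + t*0 \<le> c" using hc[OF comb[OF that zg]] .
        then show ?thesis using t by (simp add: field_simps)
      qed
      then show ?thesis by (rule bdd_aboveI)
    qed
    have bg: "bdd_above Dg"
    proof -
      have "y \<le> c / t" if "y \<in> Dg" for y
      proof -
        have "(1-t)*0 + t*y \<le> c" using hc[OF comb[OF zf that]] .
        then show ?thesis using t by (simp add: field_simps)
      qed
      then show ?thesis by (rule bdd_aboveI)
    qed
    define a where "a = Sup Df"
    define b where "b = Sup Dg"
    have a0: "0 \<le> a" using cSup_upper[OF zf bf] a_def by simp
    have b0: "0 \<le> b" using cSup_upper[OF zg bg] b_def by simp
    have "a \<le> (c - t*y)/(1-t)" if "y \<in> Dg" for y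
      unfolding a_def
    proof (rule cSup_least)
      show "Df \<noteq> {}" using zf by auto
      fix x assume "x \<in> Df"
      have "(1-t)*x + t*y \<le> c" using hc[OF comb[OF \<open>x \<in> Df\<close> that]] .
      then show "x \<le> (c - t*y)/(1-t)" using t by (simp add: field_simps)
    qed
    then have "b \<le> (c - (1-t)*a)/t"
      unfolding b_def
    proof (intro cSup_least)
      show "Dg \<noteq> {}" using zg by auto
      fix y assume "y \<in> Dg"
      assume "\<And>y. y \<in> Dg \<Longrightarrow> a \<le> (c - t*y)/(1-t)"
      then have "a \<le> (c - t*y)/(1-t)" using \<open>y \<in> Dg\<close> by blast
      then show "y \<le> (c - (1-t)*a)/t" using t by (simp add: field_simps)
    qed
    then have key: "(1-t)*a + t*b \<le> c" using t by (simp add: field_simps)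
    have "emeasure lborel Df = ennreal a" using dc_measure_bdd[of Df] subf zf dcf bf a_def by blast
    moreover have "emeasure lborel Dg = ennreal b" using dc_measure_bdd[of Dg] subg zg dcg bg b_def by blast
    moreover have "emeasure lborel Dh = ennreal c" using dc_measure_bdd[of Dh] subh zh dch True c_def by blast
    ultimately have "ennreal (1-t) * emeasure lborel Df + ennreal t * emeasure lborel Dg \<le> emeasure lborel Dh"
      using key t a0 b0 by (simp add: ennreal_mult[symmetric] ennreal_plus[symmetric] ennreal_leI del: ennreal_plus)
    then show ?thesis unfolding Df_def Dg_def Dh_def .
  qed
qed



lemma layer_cake:
  fixes f :: "real \<Rightarrow> real"
  assumes [measurable]: "f \<in> borel_measurable borel"
  shows "(\<integral>\<^sup>+ z. ennreal (f z) * indicator {0..} z \<partial>lborel)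
       = (\<integral>\<^sup>+ s. emeasure lborel {z. 0 \<le> z \<and> s < f z} * indicator {0<..} s \<partial>lborel)"
proof -
  have "(\<integral>\<^sup>+ z. ennreal (f z) * indicator {0..} z \<partial>lborel)
      = (\<integral>\<^sup>+ z. \<integral>\<^sup>+ s. indicator {(z, s). 0 \<le> z \<and> 0 < s \<and> s < f z} (z, s) \<partial>lborel \<partial>lborel)"
  proof (rule nn_integral_cong)
    fix z :: real
    have "(\<integral>\<^sup>+ s. indicator {(z, s). 0 \<le> z \<and> 0 < s \<and> s < f z} (z, s) \<partial>lborel)
        = (\<integral>\<^sup>+ s. indicator {0<..<f z} s * indicator {0..} z \<partial>lborel)"
      by (intro nn_integral_cong) (auto simp: indicator_def)
    also have "\<dots> = emeasure lborel {0<..<f z} * indicator {0..} z"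
      by (simp add: nn_integral_multc)
    also have "\<dots> = ennreal (f z) * indicator {0..} z"
      by (cases "0 \<le> f z") (auto simp: ennreal_neg)
    finally show "ennreal (f z) * indicator {0..} z
        = (\<integral>\<^sup>+ s. indicator {(z, s). 0 \<le> z \<and> 0 < s \<and> s < f z} (z, s) \<partial>lborel)" by simp
  qed
  also have "\<dots> = (\<integral>\<^sup>+ s. \<integral>\<^sup>+ z. indicator {(z, s). 0 \<le> z \<and> 0 < s \<and> s < f z} (z, s) \<partial>lborel \<partial>lborel)"
    by (subst lborel_pair.Fubini') (auto simp: case_prod_unfold)
  also have "\<dots> = (\<integral>\<^sup>+ s. emeasure lborel {z. 0 \<le> z \<and> s < f z} * indicator {0<..} s \<partial>lborel)"
  proof (rule nn_integral_cong)
    fix s :: real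
    have "(\<integral>\<^sup>+ z. indicator {(z, s). 0 \<le> z \<and> 0 < s \<and> s < f z} (z, s) \<partial>lborel)
       = (\<integral>\<^sup>+ z. indicator {z. 0 \<le> z \<and> s < f z} z * indicator {0<..} s \<partial>lborel)"
      by (intro nn_integral_cong) (auto simp: indicator_def)
    also have "\<dots> = emeasure lborel {z. 0 \<le> z \<and> s < f z} * indicator {0<..} s"
      by (simp add: nn_integral_multc)
    finally show "(\<integral>\<^sup>+ z. indicator {(z, s). 0 \<le> z \<and> 0 < s \<and> s < f z} (z, s) \<partial>lborel)
       = emeasure lborel {z. 0 \<le> z \<and> s < f z} * indicator {0<..} s" .
  qed
  finally show ?thesis .
qed



lemma meas_level:
  fixes f :: "real \<Rightarrow> real"
  assumes [measurable]: "f \<in> borel_measurable borel"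
  shows "(\<lambda>s. emeasure lborel {z. 0 \<le> z \<and> s < f z}) \<in> borel_measurable lborel"
proof -
  have "Measurable.pred (borel \<Otimes>\<^sub>M borel) (\<lambda>p::real\<times>real. 0 \<le> snd p \<and> fst p < f (snd p))" by measurable
  then have Q: "{(s, z). 0 \<le> z \<and> s < f z} \<in> sets (lborel \<Otimes>\<^sub>M lborel)"
    by (simp add: Measurable.pred_def space_pair_measure case_prod_unfold cong: sets_pair_measure_cong)
  have "(\<lambda>s. emeasure lborel (Pair s -` {(s, z). 0 \<le> z \<and> s < f z})) \<in> borel_measurable lborel"
    using lborel.measurable_emeasure_Pair[OF Q] .
  moreover have "\<And>s. Pair s -` {(s, z). 0 \<le> z \<and> s < f z} = {z. 0 \<le> z \<and> s < f z}" by auto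
  ultimately show ?thesis by simp
qed

lemma PL_norm:
  fixes f g h :: "real \<Rightarrow> real" and t :: real
  assumes t: "0 < t" "t < 1"
    and [measurable]: "f \<in> borel_measurable borel" "g \<in> borel_measurable borel" "h \<in> borel_measurable borel"
    and fm: "\<And>x y. 0 \<le> x \<Longrightarrow> x \<le> y \<Longrightarrow> f y \<le> f x"
    and gm: "\<And>x y. 0 \<le> x \<Longrightarrow> x \<le> y \<Longrightarrow> g y \<le> g x"
    and hm: "\<And>x y. 0 \<le> x \<Longrightarrow> x \<le> y \<Longrightarrow> h y \<le> h x"
    and pl: "\<And>x y. 0 \<le> x \<Longrightarrow> 0 \<le> y \<Longrightarrow> min (f x) (g y) \<le> h ((1-t)*x + t*y)"
    and f0: "f 0 = 1" and g0: "g 0 = 1"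
  shows "ennreal (1-t) * (\<integral>\<^sup>+ z. ennreal (f z) * indicator {0..} z \<partial>lborel)
       + ennreal t * (\<integral>\<^sup>+ z. ennreal (g z) * indicator {0..} z \<partial>lborel)
       \<le> (\<integral>\<^sup>+ z. ennreal (h z) * indicator {0..} z \<partial>lborel)"
proof -
  let ?mf = "\<lambda>s. emeasure lborel {z. 0 \<le> z \<and> s < f z}"
  let ?mg = "\<lambda>s. emeasure lborel {z. 0 \<le> z \<and> s < g z}"
  let ?mh = "\<lambda>s. emeasure lborel {z. 0 \<le> z \<and> s < h z}"
  have [measurable]: "?mf \<in> borel_measurable lborel" "?mg \<in> borel_measurable lborel"
    by (rule meas_level, simp)+
  have pw: "ennreal (1-t) * (?mf s * indicator {0<..} s) + ennreal t * (?mg s * indicator {0<..} s)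
      \<le> ?mh s * indicator {0<..} s" for s
  proof (cases "0 < s")
    case False then show ?thesis by simp
  next
    case True
    show ?thesis
    proof (cases "s < 1")
      case True
      have "ennreal (1-t) * ?mf s + ennreal t * ?mg s \<le> ?mh s"
        by (rule level_ineq[where f=f and g=g and h=h, OF t fm gm hm pl]) (use True f0 g0 in auto)
      then show ?thesis using \<open>0 < s\<close> by (simp add: algebra_simps)
    next
      case False
      have e1: "{z. 0 \<le> z \<and> s < f z} = {}" using fm[of 0] f0 False by force
      have e2: "{z. 0 \<le> z \<and> s < g z} = {}" using gm[of 0] g0 False by force
      show ?thesis unfolding e1 e2 by simp
    qed
  qed
  have "ennreal (1-t) * (\<integral>\<^sup>+ z. ennreal (f z) * indicator {0..} z \<partial>lborel)
       + ennreal t * (\<integral>\<^sup>+ z. ennreal (g z) * indicator {0..} z \<partial>lborel)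
     = ennreal (1-t) * (\<integral>\<^sup>+ s. ?mf s * indicator {0<..} s \<partial>lborel)
       + ennreal t * (\<integral>\<^sup>+ s. ?mg s * indicator {0<..} s \<partial>lborel)"
    by (simp add: layer_cake)
  also have "\<dots> = (\<integral>\<^sup>+ s. ennreal (1-t) * (?mf s * indicator {0<..} s)
       + ennreal t * (?mg s * indicator {0<..} s) \<partial>lborel)"
    by (simp add: nn_integral_add nn_integral_cmult)
  also have "\<dots> \<le> (\<integral>\<^sup>+ s. ?mh s * indicator {0<..} s \<partial>lborel)"
    by (rule nn_integral_mono) (rule pw)
  also have "\<dots> = (\<integral>\<^sup>+ z. ennreal (h z) * indicator {0..} z \<partial>lborel)"
    by (simp add: layer_cake)
  finally show ?thesis .
qed



lemma min_le_geo:
  fixes a b t :: real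
  assumes "0 \<le> a" "0 \<le> b" "0 < t" "t < 1"
  shows "min a b \<le> a powr (1-t) * b powr t"
proof (cases "a = 0 \<or> b = 0")
  case True then show ?thesis using assms by auto
next
  case False
  then have a: "0 < a" and b: "0 < b" using assms by auto
  show ?thesis
  proof (cases "a \<le> b")
    case True
    have "a powr t \<le> b powr t" using True a assms by (simp add: powr_mono2)
    then have "a powr (1-t) * a powr t \<le> a powr (1-t) * b powr t" by (simp add: mult_left_mono)
    moreover have "a powr (1-t) * a powr t = a" using a by (simp add: powr_add[symmetric])
    ultimately show ?thesis using True by simp
  next
    case False
    have "b powr (1-t) \<le> a powr (1-t)" using False b assms by (simp add: powr_mono2)
    then have "b powr (1-t) * b powr t \<le> a powr (1-t) * b powr t" by (simp add: mult_right_mono)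
    moreover have "b powr (1-t) * b powr t = b" using b by (simp add: powr_add[symmetric])
    ultimately show ?thesis using False by simp
  qed
qed

lemma nn_integral_scale:
  fixes f :: "real \<Rightarrow> real" and F If :: real
  assumes "0 < F" "\<And>z. 0 \<le> f z" and [measurable]: "f \<in> borel_measurable borel"
    and I: "(\<integral>\<^sup>+ z. ennreal (f z) * indicator {0..} z \<partial>lborel) = ennreal If"
  shows "(\<integral>\<^sup>+ z. ennreal (f z / F) * indicator {0..} z \<partial>lborel) = ennreal (If / F)"
proof -
  have "(\<integral>\<^sup>+ z. ennreal (f z / F) * indicator {0..} z \<partial>lborel)
      = (\<integral>\<^sup>+ z. ennreal (1/F) * (ennreal (f z) * indicator {0..} z) \<partial>lborel)"
    proof (intro nn_integral_cong)
    fix z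
    have "ennreal (f z / F) = ennreal (1/F) * ennreal (f z)"
      using assms by (simp add: ennreal_mult[symmetric])
    then show "ennreal (f z / F) * indicator {0..} z = ennreal (1/F) * (ennreal (f z) * indicator {0..} z)"
      by (simp add: mult.assoc)
  qed
  also have "\<dots> = ennreal (1/F) * ennreal If"
    by (subst nn_integral_cmult) (auto simp: I[symmetric])
  also have "\<dots> = ennreal (If / F)"
    using assms by (simp add: ennreal_mult'[symmetric])
  finally show ?thesis .
qed

lemma PL:
  fixes f g h :: "real \<Rightarrow> real" and t If Ig Ih :: real
  assumes t: "0 < t" "t < 1"
    and [measurable]: "f \<in> borel_measurable borel" "g \<in> borel_measurable borel" "h \<in> borel_measurable borel"
    and fnn: "\<And>z. 0 \<le> f z" and gnn: "\<And>z. 0 \<le> g z" and hnn: "\<And>z. 0 \<le> h z"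
    and fm: "\<And>x y. 0 \<le> x \<Longrightarrow> x \<le> y \<Longrightarrow> f y \<le> f x"
    and gm: "\<And>x y. 0 \<le> x \<Longrightarrow> x \<le> y \<Longrightarrow> g y \<le> g x"
    and hm: "\<And>x y. 0 \<le> x \<Longrightarrow> x \<le> y \<Longrightarrow> h y \<le> h x"
    and pl: "\<And>x y. 0 \<le> x \<Longrightarrow> 0 \<le> y \<Longrightarrow> f x powr (1-t) * g y powr t \<le> h ((1-t)*x + t*y)"
    and f0: "0 < f 0" and g0: "0 < g 0"
    and If: "(\<integral>\<^sup>+ z. ennreal (f z) * indicator {0..} z \<partial>lborel) = ennreal If"
    and Ig: "(\<integral>\<^sup>+ z. ennreal (g z) * indicator {0..} z \<partial>lborel) = ennreal Ig"
    and Ih: "(\<integral>\<^sup>+ z. ennreal (h z) * indicator {0..} z \<partial>lborel) = ennreal Ih"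
    and nn: "0 \<le> If" "0 \<le> Ig" "0 \<le> Ih"
  shows "If powr (1-t) * Ig powr t \<le> Ih"
proof (cases "If = 0 \<or> Ig = 0")
  case True then show ?thesis using nn by auto
next
  case False
  then have Ifp: "0 < If" and Igp: "0 < Ig" using nn by auto
  define F where "F = f 0"
  define G where "G = g 0"
  define c where "c = F powr (1-t) * G powr t"
  have F: "0 < F" and G: "0 < G" using f0 g0 F_def G_def by auto
  have c: "0 < c" using F G c_def by simp
  let ?f = "\<lambda>z. f z / F" and ?g = "\<lambda>z. g z / G" and ?h = "\<lambda>z. h z / c"
  have "ennreal (1-t) * (\<integral>\<^sup>+ z. ennreal (?f z) * indicator {0..} z \<partial>lborel)
       + ennreal t * (\<integral>\<^sup>+ z. ennreal (?g z) * indicator {0..} z \<partial>lborel)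
       \<le> (\<integral>\<^sup>+ z. ennreal (?h z) * indicator {0..} z \<partial>lborel)"
  proof (rule PL_norm[OF t])
    show "?f \<in> borel_measurable borel" "?g \<in> borel_measurable borel" "?h \<in> borel_measurable borel"
      by measurable
    show "?f y \<le> ?f x" if "0 \<le> x" "x \<le> y" for x y using fm[OF that] F by (simp add: divide_right_mono)
    show "?g y \<le> ?g x" if "0 \<le> x" "x \<le> y" for x y using gm[OF that] G by (simp add: divide_right_mono)
    show "?h y \<le> ?h x" if "0 \<le> x" "x \<le> y" for x y using hm[OF that] c by (simp add: divide_right_mono)
    show "?f 0 = 1" "?g 0 = 1" using F G F_def G_def by auto
    show "min (?f x) (?g y) \<le> ?h ((1-t)*x + t*y)" if "0 \<le> x" "0 \<le> y" for x y
    proof -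
      have "min (?f x) (?g y) \<le> ?f x powr (1-t) * ?g y powr t"
        using min_le_geo[of "?f x" "?g y" t] fnn gnn F G t by simp
      also have "\<dots> = (f x powr (1-t) * g y powr t) / c"
        using fnn gnn F G by (simp add: powr_divide c_def)
      also have "\<dots> \<le> ?h ((1-t)*x + t*y)"
        using pl[OF that] c by (simp add: divide_right_mono)
      finally show ?thesis .
    qed
  qed
  then have "ennreal (1-t) * ennreal (If / F) + ennreal t * ennreal (Ig / G) \<le> ennreal (Ih / c)"
    using nn_integral_scale[OF F fnn _ If] nn_integral_scale[OF G gnn _ Ig] nn_integral_scale[OF c hnn _ Ih]
    by simp
  then have "ennreal ((1-t) * (If / F) + t * (Ig / G)) \<le> ennreal (Ih / c)"
    using t nn F G by (simp add: ennreal_mult'[symmetric] ennreal_plus[symmetric] del: ennreal_plus)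
  then have lin: "(1-t) * (If / F) + t * (Ig / G) \<le> Ih / c"
    using nn c by (simp add: ennreal_le_iff)
  have "(If / F) powr (1-t) * (Ig / G) powr t \<le> (1-t) * (If / F) + t * (Ig / G)"
    using Youngs_inequality_0[of "1-t" t "If/F" "Ig/G"] t Ifp Igp F G by simp
  also have "(If / F) powr (1-t) * (Ig / G) powr t = (If powr (1-t) * Ig powr t) / c"
    using nn F G by (simp add: powr_divide c_def)
  finally have "(If powr (1-t) * Ig powr t) / c \<le> Ih / c" using lin by simp
  then show ?thesis using c by (simp add: divide_le_cancel)
qed



lemma chi2_1_density_measurable[measurable]: "chi2_1_density \<in> borel_measurable borel"
  unfolding chi2_1_density_def[abs_def] by measurable

lemma chi2_1_density_nonneg: "0 \<le> chi2_1_density y"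
  by (simp add: chi2_1_density_def)

lemma SUP_ind:
  fixes B :: "nat \<Rightarrow> real" and q y :: real
  assumes q: "0 \<le> q" and B: "mono B" and ex: "\<exists>n. y \<le> B n"
  shows "(SUP n. ennreal (q * indicator {0..B n} y)) = ennreal (q * indicator {0..} y)"
proof (rule antisym)
  show "(SUP n. ennreal (q * indicator {0..B n} y)) \<le> ennreal (q * indicator {0..} y)"
    using q by (intro SUP_least ennreal_leI mult_left_mono) (auto simp: indicator_def)
  obtain n where n: "y \<le> B n" using ex by blast
  have "ennreal (q * indicator {0..} y) = ennreal (q * indicator {0..B n} y)"
    using n by (auto simp: indicator_def)
  then show "ennreal (q * indicator {0..} y) \<le> (SUP n. ennreal (q * indicator {0..B n} y))"
    by (intro SUP_upper2[of n]) auto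
qed

lemma incseq_ind:
  fixes B :: "nat \<Rightarrow> real" and q :: "real \<Rightarrow> real"
  assumes q: "\<And>y. 0 \<le> q y" and B: "mono B"
  shows "incseq (\<lambda>n y. ennreal (q y * indicator {0..B n} y))"
proof (intro monoI le_funI ennreal_leI)
  fix m n :: nat and y assume "m \<le> n"
  then have "B m \<le> B n" using B by (simp add: monoD)
  then show "q y * indicator {0..B m} y \<le> q y * indicator {0..B n} y"
    using q[of y] by (auto simp: indicator_def)
qed

lemma chi2_subst:
  fixes F :: "real \<Rightarrow> real"
  assumes [measurable]: "F \<in> borel_measurable borel" and Fnn: "\<And>y. 0 \<le> F y"
  shows "(\<integral>\<^sup>+ y. ennreal (F y) \<partial>chi2_1)
       = (\<integral>\<^sup>+ z. ennreal (2 * std_normal_density z * F (z\<^sup>2)) * indicator {0..} z \<partial>lborel)"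
proof -
  let ?P = "\<lambda>y. chi2_1_density y * F y"
  have Pnn: "0 \<le> ?P y" for y using chi2_1_density_nonneg Fnn by simp
  have monoB1: "mono (\<lambda>n::nat. (real n)\<^sup>2)" by (intro monoI power_mono) auto
  have monoB2: "mono (\<lambda>n::nat. real n)" by (intro monoI) auto
  have ex1: "\<exists>n::nat. y \<le> (real n)\<^sup>2" for y :: real
  proof -
    obtain n :: nat where "max y 1 \<le> real n" using real_arch_simple by blast
    then have "y \<le> real n" "1 \<le> real n" by auto
    then have "y \<le> (real n)\<^sup>2" by (smt (verit) mult_le_cancel_left1 power2_eq_square)
    then show ?thesis by blast
  qed
  have ex2: "\<exists>n::nat. y \<le> real n" for y :: real using real_arch_simple by blast
  have "(\<integral>\<^sup>+ y. ennreal (F y) \<partial>chi2_1) = (\<integral>\<^sup>+ y. ennreal (chi2_1_density y) * ennreal (F y) \<partial>lborel)"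
    unfolding chi2_1_def by (subst nn_integral_density) auto
  also have "\<dots> = (\<integral>\<^sup>+ y. ennreal (?P y * indicator {0..} y) \<partial>lborel)"
    by (intro nn_integral_cong) (auto simp: chi2_1_density_def indicator_def ennreal_mult'[symmetric])
  also have "\<dots> = (\<integral>\<^sup>+ y. (SUP n. ennreal (?P y * indicator {0..(real n)\<^sup>2} y)) \<partial>lborel)"
    by (intro nn_integral_cong SUP_ind[OF Pnn monoB1 ex1, symmetric])
  also have "\<dots> = (SUP n. (\<integral>\<^sup>+ y. ennreal (?P y * indicator {0..(real n)\<^sup>2} y) \<partial>lborel))"
    by (rule nn_integral_monotone_convergence_SUP[OF incseq_ind[of ?P "\<lambda>n. (real n)\<^sup>2", OF Pnn monoB1]]) measurable
  also have "\<dots> = (SUP n. (\<integral>\<^sup>+ z. ennreal (2 * std_normal_density z * F (z\<^sup>2) * indicator {0..real n} z) \<partial>lborel))"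
  proof (rule SUP_cong[OF refl])
    fix n :: nat
    have "(\<integral>\<^sup>+ y. ennreal (?P y * indicator {0..(real n)\<^sup>2} y) \<partial>lborel)
        = (\<integral>\<^sup>+ y. ennreal (?P y * indicator {0\<^sup>2..(real n)\<^sup>2} y) \<partial>lborel)" by simp
    also have "\<dots> = (\<integral>\<^sup>+ z. ennreal (?P (z\<^sup>2) * (2 * z) * indicator {0..real n} z) \<partial>lborel)"
      by (subst nn_integral_substitution[where g = "\<lambda>x. x ^ 2" and g' = "\<lambda>x. 2 * x"])
         (auto intro!: derivative_eq_intros continuous_intros simp: set_borel_measurable_def)
    also have "\<dots> = (\<integral>\<^sup>+ z. ennreal (2 * std_normal_density z * F (z\<^sup>2) * indicator {0..real n} z) \<partial>lborel)"
    proof (intro nn_integral_cong_AE eventually_mono[OF AE_lborel_singleton[of 0]])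
      fix z :: real assume "z \<noteq> 0"
      show "ennreal (?P (z\<^sup>2) * (2 * z) * indicator {0..real n} z)
          = ennreal (2 * std_normal_density z * F (z\<^sup>2) * indicator {0..real n} z)"
      proof (cases "0 < z")
        case True
        have "sqrt (2 * pi * z\<^sup>2) = sqrt (2 * pi) * z"
          using True by (simp add: real_sqrt_mult)
        then have "chi2_1_density (z\<^sup>2) * (2 * z) = 2 * std_normal_density z"
          using True by (simp add: chi2_1_density_def std_normal_density_def field_simps)
        note eq = this
        have "?P (z\<^sup>2) * (2 * z) * indicator {0..real n} z = (chi2_1_density (z\<^sup>2) * (2 * z)) * F (z\<^sup>2) * indicator {0..real n} z"
          by (simp only: mult_ac)
        also have "\<dots> = 2 * std_normal_density z * F (z\<^sup>2) * indicator {0..real n} z"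
          by (simp only: eq)
        finally have "?P (z\<^sup>2) * (2 * z) * indicator {0..real n} z = 2 * std_normal_density z * F (z\<^sup>2) * indicator {0..real n} z" .
        then show ?thesis by (rule arg_cong)
      next
        case False
        then have "z < 0" using \<open>z \<noteq> 0\<close> by simp
        then show ?thesis by (simp add: indicator_def)
      qed
    qed
    finally show "(\<integral>\<^sup>+ y. ennreal (?P y * indicator {0..(real n)\<^sup>2} y) \<partial>lborel)
        = (\<integral>\<^sup>+ z. ennreal (2 * std_normal_density z * F (z\<^sup>2) * indicator {0..real n} z) \<partial>lborel)" .
  qed
  also have "\<dots> = (\<integral>\<^sup>+ z. (SUP n. ennreal (2 * std_normal_density z * F (z\<^sup>2) * indicator {0..real n} z)) \<partial>lborel)"
    by (rule nn_integral_monotone_convergence_SUP[OF incseq_ind[of "\<lambda>z. 2 * std_normal_density z * F (z\<^sup>2)" "\<lambda>n. real n", OF _ monoB2], symmetric])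
       (simp_all add: Fnn)
  also have "\<dots> = (\<integral>\<^sup>+ z. ennreal (2 * std_normal_density z * F (z\<^sup>2) * indicator {0..} z) \<partial>lborel)"
    by (intro nn_integral_cong SUP_ind[OF _ monoB2 ex2]) (simp add: Fnn)
  also have "\<dots> = (\<integral>\<^sup>+ z. ennreal (2 * std_normal_density z * F (z\<^sup>2)) * indicator {0..} z \<partial>lborel)"
    by (intro nn_integral_cong) (simp add: indicator_def)
  finally show ?thesis .
qed



lemma phi_exp: "std_normal_density z = exp (- z\<^sup>2 / 2 - ln (sqrt (2 * pi)))"
  by (simp add: std_normal_density_def exp_diff)

lemma phi_pos: "0 < std_normal_density z"
  by (simp add: normal_density_pos)

lemma phi_mono:
  assumes "0 \<le> a" "a \<le> b" shows "std_normal_density b \<le> std_normal_density a"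
proof -
  have "a\<^sup>2 \<le> b\<^sup>2" using assms by (simp add: power_mono)
  then show ?thesis unfolding phi_exp by simp
qed

lemma exp_powr': "exp (A::real) powr s = exp (s * A)"
  by (simp add: powr_def)

lemma phi_logconc:
  assumes t: "0 < t" "t < 1"
  shows "std_normal_density a powr (1-t) * std_normal_density b powr t
       \<le> std_normal_density ((1-t)*a + t*b)"
proof -
  define K where "K = ln (sqrt (2 * pi))"
  have "std_normal_density a powr (1-t) * std_normal_density b powr t
      = exp ((1-t) * (- a\<^sup>2 / 2 - K) + t * (- b\<^sup>2 / 2 - K))"
    unfolding phi_exp K_def[symmetric] exp_powr' by (simp add: exp_add)
  also have "\<dots> \<le> exp (- ((1-t)*a + t*b)\<^sup>2 / 2 - K)"
  proof -
    have "((1-t)*a + t*b)\<^sup>2 \<le> (1-t)*a\<^sup>2 + t*b\<^sup>2"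
    proof -
      have "(1-t)*a\<^sup>2 + t*b\<^sup>2 - ((1-t)*a + t*b)\<^sup>2 = t*(1-t)*(a-b)\<^sup>2"
        by (simp add: power2_eq_square algebra_simps)
      moreover have "0 \<le> t*(1-t)*(a-b)\<^sup>2" using t by simp
      ultimately show ?thesis by linarith
    qed
    then show ?thesis by (simp add: algebra_simps)
  qed
  also have "\<dots> = std_normal_density ((1-t)*a + t*b)"
    unfolding phi_exp K_def by simp
  finally show ?thesis .
qed

lemma half_normal: "(\<integral>\<^sup>+ z. ennreal (std_normal_density z) * indicator {0..} z \<partial>lborel)
   + (\<integral>\<^sup>+ z. ennreal (std_normal_density z) * indicator {0..} z \<partial>lborel) = 1"
proof -
  let ?p = std_normal_density
  have one: "(\<integral>\<^sup>+ z. ennreal (?p z) \<partial>lborel) = 1"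
  proof -
    interpret prob_space "density lborel ?p" by (rule prob_space_normal_density) simp
    have "emeasure (density lborel ?p) UNIV = 1" using emeasure_space_1 by simp
    then show ?thesis by (simp add: emeasure_density)
  qed
  have split: "(\<integral>\<^sup>+ z. ennreal (?p z) \<partial>lborel)
      = (\<integral>\<^sup>+ z. ennreal (?p z) * indicator {0..} z \<partial>lborel) + (\<integral>\<^sup>+ z. ennreal (?p z) * indicator {..<0} z \<partial>lborel)"
    by (subst nn_integral_add[symmetric]) (auto intro!: nn_integral_cong simp: indicator_def)
  have "(\<integral>\<^sup>+ z. ennreal (?p z) * indicator {..<0} z \<partial>lborel)
      = ennreal \<bar>-1\<bar> * (\<integral>\<^sup>+ z. ennreal (?p (0 + (-1) * z)) * indicator {..<0} (0 + (-1) * z) \<partial>lborel)"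
    using nn_integral_real_affine[of "\<lambda>z. ennreal (?p z) * indicator {..<0} z" "-1" 0] by simp
  also have "\<dots> = (\<integral>\<^sup>+ z. ennreal (?p z) * indicator {0<..} z \<partial>lborel)"
    by (auto intro!: nn_integral_cong simp: indicator_def std_normal_density_def)
  also have "\<dots> = (\<integral>\<^sup>+ z. ennreal (?p z) * indicator {0..} z \<partial>lborel)"
    by (intro nn_integral_cong_AE eventually_mono[OF AE_lborel_singleton[of 0]]) (auto simp: indicator_def)
  finally show ?thesis using one split by simp
qed

lemma chi2_prob: "prob_space chi2_1"
proof
  have "emeasure chi2_1 (space chi2_1) = (\<integral>\<^sup>+ y. ennreal 1 \<partial>chi2_1)"
    by simp
  also have "\<dots> = (\<integral>\<^sup>+ z. ennreal (2 * std_normal_density z * 1) * indicator {0..} z \<partial>lborel)"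
    by (rule chi2_subst) auto
  also have "\<dots> = (\<integral>\<^sup>+ z. ennreal (std_normal_density z) * indicator {0..} z + ennreal (std_normal_density z) * indicator {0..} z \<partial>lborel)"
  proof (intro nn_integral_cong)
    fix z
    have "ennreal (2 * std_normal_density z * 1) = ennreal (std_normal_density z) + ennreal (std_normal_density z)"
      using phi_pos[of z] by (simp add: ennreal_plus[symmetric] del: ennreal_plus)
    then show "ennreal (2 * std_normal_density z * 1) * indicator {0..} z = ennreal (std_normal_density z) * indicator {0..} z + ennreal (std_normal_density z) * indicator {0..} z"
      by (simp add: distrib_right)
  qed
  also have "\<dots> = 1"
    by (subst nn_integral_add) (auto simp: half_normal)
  finally show "emeasure chi2_1 (space chi2_1) = 1" .
qed



definition good :: "(real \<Rightarrow> real) \<Rightarrow> bool" where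
  "good G \<longleftrightarrow> mono G \<and> (\<forall>u. 0 \<le> G u) \<and> (\<forall>u. G u \<le> 1) \<and> (\<forall>u. u \<le> 0 \<longrightarrow> G u = 0)
     \<and> (\<forall>u. 0 < u \<longrightarrow> 0 < G u)
     \<and> (\<forall>x y t. 0 < t \<longrightarrow> t < 1 \<longrightarrow> G x powr (1-t) * G y powr t \<le> G ((1-t)*x + t*y))"

lemma sq_convex:
  fixes a b t :: real assumes t: "0 < t" "t < 1"
  shows "((1-t)*a + t*b)\<^sup>2 \<le> (1-t)*a\<^sup>2 + t*b\<^sup>2"
proof -
  have "(1-t)*a\<^sup>2 + t*b\<^sup>2 - ((1-t)*a + t*b)\<^sup>2 = t*(1-t)*(a-b)\<^sup>2"
    by (simp add: power2_eq_square algebra_simps)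
  moreover have "0 \<le> t*(1-t)*(a-b)\<^sup>2" using t by simp
  ultimately show ?thesis by linarith
qed

lemma half_normal_le: "(\<integral>\<^sup>+ z. ennreal (std_normal_density z) * indicator {0..} z \<partial>lborel) \<le> 1"
proof -
  let ?X = "(\<integral>\<^sup>+ z. ennreal (std_normal_density z) * indicator {0..} z \<partial>lborel)"
  have "?X \<le> ?X + ?X" by simp
  then show ?thesis using half_normal by simp
qed

lemma step:
  fixes G L :: "real \<Rightarrow> real" and lam :: real
  assumes gG: "good G" and lam: "0 < lam" and Lnn: "\<And>u. 0 \<le> L u"
    and Leq: "\<And>u. ennreal (L u) = (\<integral>\<^sup>+ y. ennreal (G (u - lam*y)) \<partial>chi2_1)"
  shows "good L"
proof -
  let ?p = std_normal_density
  have Gmono: "mono G" and Gnn: "\<And>u. 0 \<le> G u" and Gle1: "\<And>u. G u \<le> 1"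
    and Gneg: "\<And>u. u \<le> 0 \<Longrightarrow> G u = 0" and Gpos: "\<And>u. 0 < u \<Longrightarrow> 0 < G u"
    and Glc: "\<And>x y t. 0 < t \<Longrightarrow> t < 1 \<Longrightarrow> G x powr (1-t) * G y powr t \<le> G ((1-t)*x + t*y)"
    using gG unfolding good_def by auto
  have Gm[measurable]: "G \<in> borel_measurable borel" using Gmono by (rule borel_measurable_mono)
  interpret chi: prob_space chi2_1 by (rule chi2_prob)
  have J: "(\<integral>\<^sup>+ z. ennreal (?p z * G (u - lam*z\<^sup>2)) * indicator {0..} z \<partial>lborel) = ennreal (L u / 2)" for u
  proof -
    let ?J = "(\<integral>\<^sup>+ z. ennreal (?p z * G (u - lam*z\<^sup>2)) * indicator {0..} z \<partial>lborel)"
    have "ennreal (L u) = (\<integral>\<^sup>+ z. ennreal (2 * ?p z * G (u - lam*z\<^sup>2)) * indicator {0..} z \<partial>lborel)"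
      unfolding Leq by (rule chi2_subst[where F = "\<lambda>y. G (u - lam*y)"]) (auto simp: Gnn)
    also have "\<dots> = (\<integral>\<^sup>+ z. 2 * (ennreal (?p z * G (u - lam*z\<^sup>2)) * indicator {0..} z) \<partial>lborel)"
    proof (intro nn_integral_cong)
      fix z
      have "ennreal (2 * (?p z * G (u - lam*z\<^sup>2))) = 2 * ennreal (?p z * G (u - lam*z\<^sup>2))"
        using Gnn phi_pos[of z] by (simp add: ennreal_mult)
      then show "ennreal (2 * ?p z * G (u - lam*z\<^sup>2)) * indicator {0..} z = 2 * (ennreal (?p z * G (u - lam*z\<^sup>2)) * indicator {0..} z)"
        by (simp add: mult.assoc)
    qed
    also have "\<dots> = 2 * ?J"
      by (rule nn_integral_cmult) measurable
    finally have e: "ennreal (L u) = 2 * ?J" .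
    have "?J \<le> (\<integral>\<^sup>+ z. ennreal (?p z) * indicator {0..} z \<partial>lborel)"
      by (intro nn_integral_mono mult_right_mono ennreal_leI)
         (auto simp: Gle1 mult_left_le[OF Gle1] less_imp_le[OF phi_pos])
    also have "\<dots> \<le> 1" by (rule half_normal_le)
    finally have "?J < \<infinity>" by (simp add: le_less_trans)
    then obtain r where r: "?J = ennreal r" "0 \<le> r" by (cases ?J rule: ennreal_cases) auto
    then have "ennreal (L u) = ennreal (2 * r)" using e by (simp add: ennreal_mult')
    then have "L u = 2 * r" using Lnn r by (simp add: ennreal_inj)
    then show ?thesis using r by simp
  qed
  have Lmono: "mono L"
  proof (rule monoI)
    fix u v :: real assume "u \<le> v"
    have "ennreal (L u) \<le> ennreal (L v)"
      unfolding Leq by (intro nn_integral_mono ennreal_leI) (use \<open>u \<le> v\<close> Gmono in \<open>auto simp: mono_def\<close>)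
    then show "L u \<le> L v" using Lnn by (simp add: ennreal_le_iff)
  qed
  have Lle1: "L u \<le> 1" for u
  proof -
    have "ennreal (L u) \<le> (\<integral>\<^sup>+ y. ennreal 1 \<partial>chi2_1)"
      unfolding Leq by (intro nn_integral_mono ennreal_leI) (simp add: Gle1)
    also have "\<dots> = ennreal 1" using chi.emeasure_space_1 by simp
    finally have "ennreal (L u) \<le> ennreal 1" .
    then show ?thesis by (subst (asm) ennreal_le_iff) auto
  qed
  have Lneg: "L u = 0" if "u \<le> 0" for u
  proof -
    have "(\<integral>\<^sup>+ z. ennreal (?p z * G (u - lam*z\<^sup>2)) * indicator {0..} z \<partial>lborel) = (\<integral>\<^sup>+ (z::real). 0 \<partial>lborel)"
    proof (rule nn_integral_cong)
      fix z :: real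
      have "0 \<le> lam*z\<^sup>2" using lam by simp
      then have "u - lam*z\<^sup>2 \<le> 0" using that by linarith
      then show "ennreal (?p z * G (u - lam*z\<^sup>2)) * indicator {0..} z = 0" by (simp add: Gneg)
    qed
    then have "ennreal (L u / 2) = 0" using J[of u] by simp
    then show ?thesis using Lnn[of u] by simp
  qed
  have Lpos: "0 < L u" if "0 < u" for u
  proof -
    define d where "d = min 1 (u / (2*lam))"
    have d: "0 < d" "d \<le> 1" "lam * d \<le> u/2" using that lam by (auto simp: d_def min_def field_simps)
    have "ennreal (?p d * G (u/2)) * indicator {0..d} z \<le> ennreal (?p z * G (u - lam*z\<^sup>2)) * indicator {0..} z" for z
    proof (cases "z \<in> {0..d}")
      case True
      then have z: "0 \<le> z" "z \<le> d" by auto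
      have "z * z \<le> z" using z d by (intro mult_left_le) auto
      then have "z\<^sup>2 \<le> d" using z by (simp add: power2_eq_square)
      then have "lam * z\<^sup>2 \<le> lam * d" using lam by (simp add: mult_left_mono)
      then have "lam * z\<^sup>2 \<le> u/2" using d by linarith
      then have "G (u/2) \<le> G (u - lam*z\<^sup>2)" using Gmono by (simp add: monoD)
      moreover have "?p d \<le> ?p z" using phi_mono z by blast
      ultimately have "?p d * G (u/2) \<le> ?p z * G (u - lam*z\<^sup>2)"
        by (intro mult_mono) (auto simp: Gnn less_imp_le[OF phi_pos])
      then show ?thesis using z by (simp add: ennreal_leI)
    qed simp
    then have "(\<integral>\<^sup>+ z. ennreal (?p d * G (u/2)) * indicator {0..d} z \<partial>lborel) \<le> ennreal (L u / 2)"
      unfolding J[of u, symmetric] by (rule nn_integral_mono)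
    moreover have "(\<integral>\<^sup>+ z. ennreal (?p d * G (u/2)) * indicator {0..d} z \<partial>lborel) = ennreal (?p d * G (u/2)) * ennreal d"
      using d by (simp add: nn_integral_cmult_indicator)
    moreover have "0 < ?p d * G (u/2) * d" using d phi_pos Gpos that by simp
    ultimately have "ennreal (?p d * G (u/2) * d) \<le> ennreal (L u / 2)"
      using d by (simp add: ennreal_mult'[symmetric] mult_nonneg_nonneg Gnn less_imp_le[OF phi_pos])
    then have "?p d * G (u/2) * d \<le> L u / 2" using Lnn[of u] by (simp add: ennreal_le_iff)
    then show ?thesis using \<open>0 < ?p d * G (u/2) * d\<close> by simp
  qed
  have Llc: "L x powr (1-t) * L y powr t \<le> L ((1-t)*x + t*y)" if t: "0 < t" "t < 1" for x y t
  proof (cases "x \<le> 0 \<or> y \<le> 0")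
    case True
    then have "L x = 0 \<or> L y = 0" using Lneg by auto
    then show ?thesis
    proof
      assume "L x = 0" then show ?thesis using Lnn[of "(1-t)*x + t*y"] by simp
    next
      assume "L y = 0" then show ?thesis using Lnn[of "(1-t)*x + t*y"] by simp
    qed
  next
    case False
    then have x: "0 < x" and y: "0 < y" by auto
    define w where "w = (1-t)*x + t*y"
    let ?f = "\<lambda>z. ?p z * G (x - lam*z\<^sup>2)" and ?g = "\<lambda>z. ?p z * G (y - lam*z\<^sup>2)"
      and ?h = "\<lambda>z. ?p z * G (w - lam*z\<^sup>2)"
    have dec: "?p b * G (v - lam*b\<^sup>2) \<le> ?p a * G (v - lam*a\<^sup>2)" if "0 \<le> a" "a \<le> b" for a b v
    proof -
      have "a\<^sup>2 \<le> b\<^sup>2" using that by (simp add: power_mono)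
      then have "G (v - lam*b\<^sup>2) \<le> G (v - lam*a\<^sup>2)" using lam Gmono by (simp add: monoD)
      then show ?thesis using phi_mono[OF that] by (intro mult_mono) (auto simp: Gnn less_imp_le[OF phi_pos])
    qed
    have "(L x / 2) powr (1-t) * (L y / 2) powr t \<le> L w / 2"
    proof (rule PL[OF t])
      show "?f \<in> borel_measurable borel" "?g \<in> borel_measurable borel" "?h \<in> borel_measurable borel"
        by measurable
      show "0 \<le> ?f z" "0 \<le> ?g z" "0 \<le> ?h z" for z by (auto simp: Gnn less_imp_le[OF phi_pos])
      show "?f b \<le> ?f a" "?g b \<le> ?g a" "?h b \<le> ?h a" if "0 \<le> a" "a \<le> b" for a b
        using dec[OF that] by auto
      show "0 < ?f 0" "0 < ?g 0" using x y Gpos phi_pos by auto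
      show "(\<integral>\<^sup>+ z. ennreal (?f z) * indicator {0..} z \<partial>lborel) = ennreal (L x / 2)" by (rule J)
      show "(\<integral>\<^sup>+ z. ennreal (?g z) * indicator {0..} z \<partial>lborel) = ennreal (L y / 2)" by (rule J)
      show "(\<integral>\<^sup>+ z. ennreal (?h z) * indicator {0..} z \<partial>lborel) = ennreal (L w / 2)" by (rule J)
      show "0 \<le> L x / 2" "0 \<le> L y / 2" "0 \<le> L w / 2" using Lnn by auto
      show "?f a powr (1-t) * ?g b powr t \<le> ?h ((1-t)*a + t*b)" if "0 \<le> a" "0 \<le> b" for a b
      proof -
        let ?c = "(1-t)*a + t*b"
        have "?f a powr (1-t) * ?g b powr t
            = (?p a powr (1-t) * ?p b powr t) * (G (x - lam*a\<^sup>2) powr (1-t) * G (y - lam*b\<^sup>2) powr t)"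
          by (simp add: powr_mult Gnn less_imp_le[OF phi_pos] mult_ac)
        also have "\<dots> \<le> ?p ?c * G (w - lam*?c\<^sup>2)"
        proof (rule mult_mono)
          show "?p a powr (1-t) * ?p b powr t \<le> ?p ?c" by (rule phi_logconc[OF t])
          have "G (x - lam*a\<^sup>2) powr (1-t) * G (y - lam*b\<^sup>2) powr t
              \<le> G ((1-t)*(x - lam*a\<^sup>2) + t*(y - lam*b\<^sup>2))" by (rule Glc[OF t])
          also have "\<dots> \<le> G (w - lam*?c\<^sup>2)"
          proof (rule monoD[OF Gmono])
            have "lam * ?c\<^sup>2 \<le> lam * ((1-t)*a\<^sup>2 + t*b\<^sup>2)"
              using sq_convex[OF t, of a b] lam by (simp add: mult_left_mono)
            then show "(1-t)*(x - lam*a\<^sup>2) + t*(y - lam*b\<^sup>2) \<le> w - lam*?c\<^sup>2"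
              unfolding w_def by (simp add: algebra_simps)
          qed
          finally show "G (x - lam*a\<^sup>2) powr (1-t) * G (y - lam*b\<^sup>2) powr t \<le> G (w - lam*?c\<^sup>2)" .
        qed (auto simp: Gnn less_imp_le[OF phi_pos])
        finally show ?thesis .
      qed
    qed
    also have "(L x / 2) powr (1-t) * (L y / 2) powr t = (L x powr (1-t) * L y powr t) / 2"
    proof -
      have "(L x / 2) powr (1-t) * (L y / 2) powr t = (L x powr (1-t) * L y powr t) / (2 powr (1-t) * 2 powr t)"
        using Lnn by (simp add: powr_divide)
      also have "2 powr (1-t) * 2 powr t = (2::real)" by (simp add: powr_add[symmetric])
      finally show ?thesis .
    qed
    finally show ?thesis unfolding w_def by simp
  qed
  show ?thesis unfolding good_def
    using Lmono Lnn Lle1 Lneg Lpos Llc by blast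
qed



lemma cdf_base: "chi2_weighted_cdf lam (Suc nu) nu u = (if 0 < u then 1 else 0)"
proof -
  have e: "{Suc nu..nu} = {}" by simp
  show ?thesis unfolding chi2_weighted_cdf_def e
    by (simp add: PiM_empty space_PiM_empty)
qed

lemma cdf_nonneg: "0 \<le> chi2_weighted_cdf lam m nu u"
  unfolding chi2_weighted_cdf_def by simp

lemma meas_comp:
  assumes "n \<in> J"
  shows "(\<lambda>x. x n) \<in> borel_measurable (PiM J (\<lambda>_::nat. chi2_1))"
proof -
  have m: "(\<lambda>x. x n) \<in> measurable (PiM J (\<lambda>_::nat. chi2_1)) chi2_1"
    by (rule measurable_component_singleton[OF assms])
  have s: "sets chi2_1 = sets borel" unfolding chi2_1_def by simp
  show ?thesis using m unfolding measurable_cong_sets[OF refl s] .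
qed

lemma meas_sum:
  "(\<lambda>Y. \<Sum>n\<in>J. lam n * Y n) \<in> borel_measurable (PiM J (\<lambda>_::nat. chi2_1))"
  apply (rule borel_measurable_sum)
  apply (rule borel_measurable_times)
   apply (rule measurable_const)
   apply simp
  apply (erule meas_comp)
  done

lemma meas_set:
  "{Y \<in> space (PiM J (\<lambda>_::nat. chi2_1)). (\<Sum>n\<in>J. lam n * Y n) < u} \<in> sets (PiM J (\<lambda>_::nat. chi2_1))"
  by (rule borel_measurable_less[OF meas_sum measurable_const]) simp

lemma cdf_rec:
  assumes m: "m \<le> nu"
  shows "ennreal (chi2_weighted_cdf lam m nu u)
       = (\<integral>\<^sup>+ y. ennreal (chi2_weighted_cdf lam (Suc m) nu (u - lam m * y)) \<partial>chi2_1)"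
proof -
  let ?M = "\<lambda>_::nat. chi2_1"
  let ?I = "{Suc m..nu}"
  interpret chi: prob_space chi2_1 by (rule chi2_prob)
  interpret ps: product_sigma_finite ?M
    by (simp add: product_sigma_finite_def chi.sigma_finite_measure_axioms)
  have ins: "{m..nu} = insert m ?I" using m by auto
  have fin: "finite ?I" "m \<notin> ?I" by auto
  interpret pI: prob_space "PiM ?I ?M" by (rule prob_space_PiM) (rule chi2_prob)
  interpret pJ: prob_space "PiM (insert m ?I) ?M" by (rule prob_space_PiM) (rule chi2_prob)
  define A where "A = {Y \<in> space (PiM (insert m ?I) ?M). (\<Sum>n\<in>insert m ?I. lam n * Y n) < u}"
  have A[measurable]: "A \<in> sets (PiM (insert m ?I) ?M)" unfolding A_def by (rule meas_set)
  have "ennreal (chi2_weighted_cdf lam m nu u) = emeasure (PiM (insert m ?I) ?M) A"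
    unfolding chi2_weighted_cdf_def ins A_def[symmetric]
    using pJ.emeasure_eq_measure by simp
  also have "\<dots> = (\<integral>\<^sup>+ x. indicator A x \<partial>PiM (insert m ?I) ?M)"
    by (simp add: nn_integral_indicator)
  also have "\<dots> = (\<integral>\<^sup>+ y. (\<integral>\<^sup>+ x. indicator A (x(m := y)) \<partial>PiM ?I ?M) \<partial>chi2_1)"
    by (rule ps.product_nn_integral_insert_rev[OF fin]) measurable
  also have "\<dots> = (\<integral>\<^sup>+ y. ennreal (chi2_weighted_cdf lam (Suc m) nu (u - lam m * y)) \<partial>chi2_1)"
  proof (rule nn_integral_cong)
    fix y :: real
    define B where "B = {x \<in> space (PiM ?I ?M). (\<Sum>n\<in>?I. lam n * x n) < u - lam m * y}"
    have B[measurable]: "B \<in> sets (PiM ?I ?M)" unfolding B_def by (rule meas_set)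
    have "(\<integral>\<^sup>+ x. indicator A (x(m := y)) \<partial>PiM ?I ?M) = (\<integral>\<^sup>+ x. indicator B x \<partial>PiM ?I ?M)"
    proof (rule nn_integral_cong)
      fix x assume x: "x \<in> space (PiM ?I ?M)"
      have xs: "x(m := y) \<in> space (PiM (insert m ?I) ?M)"
        using x by (auto simp: space_PiM PiE_def extensional_def chi2_1_def)
      have "(\<Sum>n\<in>insert m ?I. lam n * (x(m := y)) n) = lam m * y + (\<Sum>n\<in>?I. lam n * x n)"
        using fin by (simp add: sum.insert)
      then have "x(m := y) \<in> A \<longleftrightarrow> x \<in> B"
        unfolding A_def B_def using xs x by auto
      then show "indicator A (x(m := y)) = indicator B x" by (simp add: indicator_def)
    qed
    also have "\<dots> = emeasure (PiM ?I ?M) B" by (simp add: nn_integral_indicator)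
    also have "\<dots> = ennreal (chi2_weighted_cdf lam (Suc m) nu (u - lam m * y))"
      unfolding chi2_weighted_cdf_def B_def using pI.emeasure_eq_measure by simp
    finally show "(\<integral>\<^sup>+ x. indicator A (x(m := y)) \<partial>PiM ?I ?M)
        = ennreal (chi2_weighted_cdf lam (Suc m) nu (u - lam m * y))" .
  qed
  finally show ?thesis .
qed

lemma good_base: "good (\<lambda>u::real. if 0 < u then 1 else 0)"
proof -
  let ?G = "\<lambda>u::real. if 0 < u then 1 else (0::real)"
  have lc: "?G x powr (1-t) * ?G y powr t \<le> ?G ((1-t)*x + t*y)" if t: "0 < t" "t < 1" for x y t :: real
  proof (cases "0 < x \<and> 0 < y")
    case True
    then have "0 < (1-t)*x + t*y" using t by (simp add: add_pos_pos)
    then show ?thesis using True by simp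
  next
    case False
    then have "\<not> 0 < x \<or> \<not> 0 < y" by simp
    then show ?thesis
    proof
      assume "\<not> 0 < x" then show ?thesis by simp
    next
      assume "\<not> 0 < y" then show ?thesis by simp
    qed
  qed
  have "mono ?G" by (rule monoI) auto
  then show ?thesis unfolding good_def using lc by auto
qed

lemma good_cdf:
  assumes lam: "\<forall>n\<in>{1..nu}. 0 < lam n" and m: "1 \<le> m" "m \<le> Suc nu"
  shows "good (chi2_weighted_cdf lam m nu)"
proof -
  have "good (chi2_weighted_cdf lam (Suc nu - k) nu)" if "k \<le> nu" for k
    using that
  proof (induction k)
    case 0
    have "chi2_weighted_cdf lam (Suc nu) nu = (\<lambda>u::real. if 0 < u then 1 else 0)"
      by (rule ext) (rule cdf_base)
    then show ?case using good_base by simp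
  next
    case (Suc k)
    have e: "Suc nu - k = Suc (Suc nu - Suc k)" using Suc.prems by simp
    have IH: "good (chi2_weighted_cdf lam (Suc (Suc nu - Suc k)) nu)" using Suc by (simp add: Suc_diff_le)
    show ?case
    proof (rule step[OF IH])
      show "0 < lam (Suc nu - Suc k)" using lam Suc.prems by auto
      show "0 \<le> chi2_weighted_cdf lam (Suc nu - Suc k) nu u" for u by (rule cdf_nonneg)
      show "ennreal (chi2_weighted_cdf lam (Suc nu - Suc k) nu u)
          = (\<integral>\<^sup>+ y. ennreal (chi2_weighted_cdf lam (Suc (Suc nu - Suc k)) nu (u - lam (Suc nu - Suc k) * y)) \<partial>chi2_1)" for u
        by (rule cdf_rec) simp
    qed
  qed
  from this[of "Suc nu - m"] show ?thesis using m by simp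
qed



lemma four_point:
  assumes g: "good T" and p: "0 < p" "p \<le> q" and d: "0 < d"
  shows "T p * T (q + d) \<le> T q * T (p + d)"
proof (cases "p = q")
  case True then show ?thesis by simp
next
  case False
  then have pq: "p < q" using p by simp
  have Tnn: "\<And>u. 0 \<le> T u" and Tpos: "\<And>u. 0 < u \<Longrightarrow> 0 < T u"
    and Tlc: "\<And>x y t. 0 < t \<Longrightarrow> t < 1 \<Longrightarrow> T x powr (1-t) * T y powr t \<le> T ((1-t)*x + t*y)"
    using g unfolding good_def by auto
  define t where "t = (q - p) / (q - p + d)"
  have t: "0 < t" "t < 1" using pq d by (auto simp: t_def field_simps)
  have nz: "q - p + d \<noteq> 0" using pq d by simp
  have tm: "t * (q + d - p) = q - p"
  proof -
    define s where "s = q - p + d"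
    have s: "s \<noteq> 0" using nz s_def by simp
    have "q + d - p = s" unfolding s_def by simp
    moreover have "t = (q - p) / s" unfolding t_def s_def ..
    moreover have "(q - p) / s * s = q - p" using s by (simp add: field_simps)
    ultimately show ?thesis by simp
  qed
  have e1: "(1-t)*p + t*(q+d) = q"
  proof -
    have "(1-t)*p + t*(q+d) = p + t * (q + d - p)" by (simp add: algebra_simps)
    then show ?thesis using tm by simp
  qed
  have e2: "(1-(1-t))*p + (1-t)*(q+d) = p + d"
  proof -
    have "(1-(1-t))*p + (1-t)*(q+d) = (q + d) - t * (q + d - p)" by (simp add: algebra_simps)
    then show ?thesis using tm by simp
  qed
  have i1: "T p powr (1-t) * T (q+d) powr t \<le> T q" using Tlc[OF t, of p "q+d"] e1 by simp
  have t': "0 < 1-t" "1-t < 1" using t by auto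
  have i2: "T p powr t * T (q+d) powr (1-t) \<le> T (p+d)" using Tlc[OF t', of p "q+d"] e2 by simp
  have P: "0 < T p" and Q: "0 < T (q+d)" using Tpos p d by auto
  have "T p * T (q + d) = (T p powr (1-t) * T (q+d) powr t) * (T p powr t * T (q+d) powr (1-t))"
  proof -
    have "(T p powr (1-t) * T (q+d) powr t) * (T p powr t * T (q+d) powr (1-t))
        = (T p powr (1-t) * T p powr t) * (T (q+d) powr t * T (q+d) powr (1-t))" by (simp add: mult_ac)
    also have "\<dots> = T p * T (q+d)" using P Q by (simp add: powr_add[symmetric])
    finally show ?thesis by simp
  qed
  also have "\<dots> \<le> T q * T (p + d)"
    by (rule mult_mono[OF i1 i2]) (auto simp: Tnn)
  finally show ?thesis .
qed

theorem lemma2: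
  fixes lam :: "nat \<Rightarrow> real" and nu :: nat and rho y10 y11 :: real
  assumes "2 \<le> nu" and "0 < rho" and "\<forall>n\<in>{1..nu}. 0 < lam n"
    and "0 < y10" and "y10 < y11" and "y11 < rho / lam 1"
  shows "\<forall>a b. 0 < a \<and> a \<le> b \<and> b < (rho - lam 1 * y10) / lam 2 \<longrightarrow>
           psi_cond lam nu rho y11 b / psi_cond lam nu rho y10 b
             \<le> psi_cond lam nu rho y11 a / psi_cond lam nu rho y10 a"
proof (intro allI impI)
  fix a b :: real
  assume ab: "0 < a \<and> a \<le> b \<and> b < (rho - lam 1 * y10) / lam 2"
  have l1: "0 < lam 1" and l2: "0 < lam 2" using assms by auto
  define H where "H = H_fun lam nu"
  define T where "T = Htilde_fun lam nu"
  define c0 where "c0 = rho - lam 1 * y10"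
  define c1 where "c1 = rho - lam 1 * y11"
  have gH: "good H" unfolding H_def H_fun_def[abs_def]
    using good_cdf[of nu lam 2] assms by auto
  have Hnn: "\<And>u. 0 \<le> H u" and Hpos: "\<And>u. 0 < u \<Longrightarrow> 0 < H u" using gH unfolding good_def by auto
  have Tnn: "\<And>u. 0 \<le> T u" and Tpos: "\<And>u. 0 < u \<Longrightarrow> 0 < T u"
    and T4: "\<And>p q d. 0 < p \<Longrightarrow> p \<le> q \<Longrightarrow> 0 < d \<Longrightarrow> T p * T (q + d) \<le> T q * T (p + d)"
  proof -
    show "\<And>u. 0 \<le> T u" "\<And>u. 0 < u \<Longrightarrow> 0 < T u"
      "\<And>p q d. 0 < p \<Longrightarrow> p \<le> q \<Longrightarrow> 0 < d \<Longrightarrow> T p * T (q + d) \<le> T q * T (p + d)"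
    proof -
      show "0 \<le> T u" for u
      proof (cases "3 \<le> nu")
        case True
        then have "good (chi2_weighted_cdf lam 3 nu)" using good_cdf[of nu lam 3] assms by auto
        then show ?thesis using True unfolding T_def Htilde_fun_def good_def by auto
      qed (simp add: T_def Htilde_fun_def)
      show "0 < T u" if "0 < u" for u
      proof (cases "3 \<le> nu")
        case True
        then have "good (chi2_weighted_cdf lam 3 nu)" using good_cdf[of nu lam 3] assms by auto
        then show ?thesis using True that unfolding T_def Htilde_fun_def good_def by auto
      qed (simp add: T_def Htilde_fun_def)
      show "T p * T (q + d) \<le> T q * T (p + d)" if "0 < p" "p \<le> q" "0 < d" for p q d
      proof (cases "3 \<le> nu")
        case True
        then have g: "good (chi2_weighted_cdf lam 3 nu)" using good_cdf[of nu lam 3] assms by auto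
        have "T = chi2_weighted_cdf lam 3 nu" using True unfolding T_def Htilde_fun_def[abs_def] by simp
        then show ?thesis using four_point[OF g that] by simp
      qed (simp add: T_def Htilde_fun_def)
    qed
  qed
  have c1pos: "0 < c1" using assms l1 by (simp add: c1_def field_simps)
  have c01: "c1 < c0" using assms l1 by (simp add: c0_def c1_def)
  have psi_nn: "0 \<le> psi_cond lam nu rho y x" for y x
    unfolding psi_cond_def
    by (auto simp: chi2_1_density_def Tnn[unfolded T_def] Hnn[unfolded H_def] intro!: divide_nonneg_nonneg mult_nonneg_nonneg)
  show "psi_cond lam nu rho y11 b / psi_cond lam nu rho y10 b
      \<le> psi_cond lam nu rho y11 a / psi_cond lam nu rho y10 a"
  proof (cases "b < c1 / lam 2")
    case False
    then have "psi_cond lam nu rho y11 b = 0" unfolding psi_cond_def c1_def by auto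
    then show ?thesis using psi_nn by simp
  next
    case True
    have a0: "0 < a" and ab': "a \<le> b" and bc0: "b < c0 / lam 2" using ab c0_def by auto
    have ac1: "a < c1 / lam 2" using True ab' by simp
    have bc1: "lam 2 * b < c1" using True l2 by (simp add: field_simps)
    have ac1': "lam 2 * a < c1" using ac1 l2 by (simp add: field_simps)
    have b0: "0 < b" using a0 ab' by simp
    have ac0: "a < c0 / lam 2" using ac1 c01 l2 by (smt (verit) divide_right_mono)
    have r: "psi_cond lam nu rho y11 x / psi_cond lam nu rho y10 x
        = (T (c1 - lam 2 * x) / T (c0 - lam 2 * x)) * (H c0 / H c1)"
      if x: "0 < x" "x < c1 / lam 2" for x
    proof -
      have xc0: "x < c0 / lam 2" using x c01 l2 by (smt (verit) divide_right_mono)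
      have gx: "0 < chi2_1_density x" using x by (simp add: chi2_1_density_def)
      have p1: "0 < T (c1 - lam 2 * x)" using x l2 by (intro Tpos) (simp add: field_simps)
      have p0: "0 < T (c0 - lam 2 * x)" using xc0 l2 by (intro Tpos) (simp add: field_simps)
      have h0: "0 < H c0" "0 < H c1" using c1pos c01 by (auto intro!: Hpos)
      have E1: "psi_cond lam nu rho y11 x = chi2_1_density x * T (c1 - lam 2 * x) / H c1"
        using x unfolding psi_cond_def T_def H_def c1_def by (simp add: algebra_simps)
      have E0: "psi_cond lam nu rho y10 x = chi2_1_density x * T (c0 - lam 2 * x) / H c0"
        using x xc0 unfolding psi_cond_def T_def H_def c0_def by (simp add: algebra_simps)
      show ?thesis unfolding E1 E0 using gx p1 p0 h0 by (simp add: field_simps)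
    qed
    have K: "0 < H c0 / H c1" using c1pos c01 Hpos by simp
    have pb: "0 < c1 - lam 2 * b" using bc1 by simp
    have key: "T (c1 - lam 2 * b) * T ((c1 - lam 2 * a) + (c0 - c1)) \<le> T (c1 - lam 2 * a) * T ((c1 - lam 2 * b) + (c0 - c1))"
      by (rule T4) (use pb ab' l2 c01 in \<open>auto simp: mult_left_mono\<close>)
    have q0: "0 < T (c0 - lam 2 * a)" using ac0 l2 by (intro Tpos) (simp add: field_simps)
    have q1: "0 < T (c0 - lam 2 * b)" using bc0 l2 by (intro Tpos) (simp add: field_simps)
    have "T (c1 - lam 2 * b) / T (c0 - lam 2 * b) \<le> T (c1 - lam 2 * a) / T (c0 - lam 2 * a)"
      using key q0 q1 by (simp add: divide_le_eq le_divide_eq field_simps)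
    then have "(T (c1 - lam 2 * b) / T (c0 - lam 2 * b)) * (H c0 / H c1)
        \<le> (T (c1 - lam 2 * a) / T (c0 - lam 2 * a)) * (H c0 / H c1)"
      using mult_right_mono[OF _ less_imp_le[OF K]] by blast
    then show ?thesis using r[OF b0 True] r[OF a0 ac1] by simp
  qed
qed

end
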